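(* Let $G=K_{1,2,2}$ be the complete 3-partite graph with partite sets $\{x\}$, $\{y_1,y_2\}$, $\{z_1,z_2\}$, and let $L$ be a prime distance labeling of $G$. If $L(x)=0$, then $\{L(y_1),L(y_2),L(z_1),L(z_2)\}=\{2,-2,5,-5\}$ with $L(y_1)=-L(y_2)$ and $L(z_1)=-L(z_2)$. Conversely, if $\{L(y_1),L(y_2),L(z_1),L(z_2)\}=\{2,-2,5,-5\}$ with $L(y_1)=-L(y_2)$ and $L(z_1)=-L(z_2)$, then $L(x)=0$.
   Context: A prime distance labeling of a graph $G$ is an injective map $L:V(G)\to\mathbb{Z}$ such that for every pair of adjacent vertices $u,v$, the integer $|L(u)-L(v)|$ is prime. *)

theory Defs
  imports "HOL-Computational_Algebra.Primes"
begin

definition prime_distance_labeling :: "('v \<Rightarrow> 'v \<Rightarrow> bool) \<Rightarrow> ('v \<Rightarrow> int) \<Rightarrow> bool" where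
  "prime_distance_labeling adj L \<longleftrightarrow>
     inj L \<and> (\<forall>u v. adj u v \<longrightarrow> prime \<bar>L u - L v\<bar>)"

datatype k122_vertex = X | Y1 | Y2 | Z1 | Z2

fun k122_part :: "k122_vertex \<Rightarrow> nat" where
  "k122_part X = 0"
| "k122_part Y1 = 1"
| "k122_part Y2 = 1"
| "k122_part Z1 = 2"
| "k122_part Z2 = 2"

definition k122_adj :: "k122_vertex \<Rightarrow> k122_vertex \<Rightarrow> bool" where
  "k122_adj u v \<longleftrightarrow> k122_part u \<noteq> k122_part v"

end

theory Submission
  imports Defs
begin

lemma even_pr: "prime \<bar>k::int\<bar> \<Longrightarrow> even k \<Longrightarrow> k = 2 \<or> k = -2"
proof -
  assume p: "prime \<bar>k\<bar>" and e: "even k"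
  have "(2::int) dvd \<bar>k\<bar>" using e by simp
  hence "(2::int) = \<bar>k\<bar>" using p by (simp add: primes_dvd_imp_eq)
  thus ?thesis by linarith
qed

lemma three_pr: "prime \<bar>k::int\<bar> \<Longrightarrow> 3 dvd k \<Longrightarrow> k = 3 \<or> k = -3"
proof -
  assume p: "prime \<bar>k\<bar>" and e: "3 dvd k"
  have "(3::int) dvd \<bar>k\<bar>" using e by simp
  moreover have "prime (3::int)" by simp
  ultimately have "(3::int) = \<bar>k\<bar>" using p by (simp add: primes_dvd_imp_eq)
  thus ?thesis by linarith
qed

lemma small_npr: "prime \<bar>k::int\<bar> \<Longrightarrow> k \<noteq> 1 \<and> k \<noteq> -1 \<and> k \<noteq> 0 \<and> k \<noteq> 4 \<and> k \<noteq> -4 \<and> k \<noteq> 9 \<and> k \<noteq> -9"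
proof -
  assume p: "prime \<bar>k\<bar>"
  have "\<bar>k\<bar> \<noteq> 1" "\<bar>k\<bar> \<noteq> 0" using p by auto
  moreover have "k \<noteq> 4 \<and> k \<noteq> -4" using even_pr[OF p] by auto
  moreover have "k \<noteq> 9 \<and> k \<noteq> -9" using three_pr[OF p] by force
  ultimately show ?thesis by auto
qed

lemma triple: "prime \<bar>x::int\<bar> \<Longrightarrow> prime \<bar>y\<bar> \<Longrightarrow> prime \<bar>z\<bar> \<Longrightarrow> y = x + 2 \<Longrightarrow> z = y + 2
   \<Longrightarrow> x = 3 \<or> x = -7"
proof -
  assume px: "prime \<bar>x\<bar>" and py: "prime \<bar>y\<bar>" and pz: "prime \<bar>z\<bar>" and y: "y = x + 2" and z: "z = y + 2"
  have sx: "x \<noteq> 1 \<and> x \<noteq> -1 \<and> x \<noteq> 9 \<and> x \<noteq> -9" using small_npr[OF px] by simp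
  have sy: "y \<noteq> 1 \<and> y \<noteq> -1" using small_npr[OF py] by simp
  have sz: "z \<noteq> 1 \<and> z \<noteq> -1 \<and> z \<noteq> 9 \<and> z \<noteq> -9" using small_npr[OF pz] by simp
  have "3 dvd x \<or> 3 dvd y \<or> 3 dvd z" using y z by presburger
  then show ?thesis
  proof (elim disjE)
    assume "3 dvd x" then show ?thesis using three_pr[OF px] sz y z by auto
  next
    assume "3 dvd y" then show ?thesis using three_pr[OF py] sz sx y z by auto
  next
    assume "3 dvd z" then show ?thesis using three_pr[OF pz] sx y z by auto
  qed
qed


lemma core:
  fixes a b c d :: int
  assumes q: "prime \<bar>a\<bar>" "prime \<bar>b\<bar>" "prime \<bar>c\<bar>" "prime \<bar>d\<bar>"
    and p: "prime \<bar>a - c\<bar>" "prime \<bar>a - d\<bar>" "prime \<bar>b - c\<bar>" "prime \<bar>b - d\<bar>"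
    and ab: "a \<noteq> b" and cd: "c \<noteq> d"
  shows "(a = 2 \<or> a = -2) \<and> (b = 2 \<or> b = -2) \<and> (c = 5 \<or> c = -5) \<and> (d = 5 \<or> d = -5)
        \<or> (a = 5 \<or> a = -5) \<and> (b = 5 \<or> b = -5) \<and> (c = 2 \<or> c = -2) \<and> (d = 2 \<or> d = -2)"
proof -
  have ea: "even a \<Longrightarrow> a = 2 \<or> a = -2" using even_pr[OF q(1)] by simp
  have eb: "even b \<Longrightarrow> b = 2 \<or> b = -2" using even_pr[OF q(2)] by simp
  have ec: "even c \<Longrightarrow> c = 2 \<or> c = -2" using even_pr[OF q(3)] by simp
  have ed: "even d \<Longrightarrow> d = 2 \<or> d = -2" using even_pr[OF q(4)] by simp
  have o1: "odd a \<Longrightarrow> odd c \<Longrightarrow> a - c = 2 \<or> a - c = -2" using even_pr[OF p(1)] by auto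
  have o2: "odd a \<Longrightarrow> odd d \<Longrightarrow> a - d = 2 \<or> a - d = -2" using even_pr[OF p(2)] by auto
  have o3: "odd b \<Longrightarrow> odd c \<Longrightarrow> b - c = 2 \<or> b - c = -2" using even_pr[OF p(3)] by auto
  have o4: "odd b \<Longrightarrow> odd d \<Longrightarrow> b - d = 2 \<or> b - d = -2" using even_pr[OF p(4)] by auto
  have s1: "a - c \<noteq> 0 \<and> a - c \<noteq> 1 \<and> a - c \<noteq> -1 \<and> a - c \<noteq> 4 \<and> a - c \<noteq> -4 \<and> a - c \<noteq> 9 \<and> a - c \<noteq> -9" using small_npr[OF p(1)] by simp
  have s2: "a - d \<noteq> 0 \<and> a - d \<noteq> 1 \<and> a - d \<noteq> -1 \<and> a - d \<noteq> 4 \<and> a - d \<noteq> -4 \<and> a - d \<noteq> 9 \<and> a - d \<noteq> -9" using small_npr[OF p(2)] by simp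
  have s3: "b - c \<noteq> 0 \<and> b - c \<noteq> 1 \<and> b - c \<noteq> -1 \<and> b - c \<noteq> 4 \<and> b - c \<noteq> -4 \<and> b - c \<noteq> 9 \<and> b - c \<noteq> -9" using small_npr[OF p(3)] by simp
  have s4: "b - d \<noteq> 0 \<and> b - d \<noteq> 1 \<and> b - d \<noteq> -1 \<and> b - d \<noteq> 4 \<and> b - d \<noteq> -4 \<and> b - d \<noteq> 9 \<and> b - d \<noteq> -9" using small_npr[OF p(4)] by simp
  have trc: "prime \<bar>c - 2\<bar> \<Longrightarrow> prime \<bar>c + 2\<bar> \<Longrightarrow> c = 5 \<or> c = -5"
    using triple[of "c - 2" c "c + 2"] q by auto
  have trd: "prime \<bar>d - 2\<bar> \<Longrightarrow> prime \<bar>d + 2\<bar> \<Longrightarrow> d = 5 \<or> d = -5"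
    using triple[of "d - 2" d "d + 2"] q by auto
  have tra: "prime \<bar>a - 2\<bar> \<Longrightarrow> prime \<bar>a + 2\<bar> \<Longrightarrow> a = 5 \<or> a = -5"
    using triple[of "a - 2" a "a + 2"] q by auto
  have trb: "prime \<bar>b - 2\<bar> \<Longrightarrow> prime \<bar>b + 2\<bar> \<Longrightarrow> b = 5 \<or> b = -5"
    using triple[of "b - 2" b "b + 2"] q by auto
  show ?thesis
  proof (cases "even a \<and> even b")
    case True
    hence ab2: "a = 2 \<and> b = -2 \<or> a = -2 \<and> b = 2" using ea eb ab by auto
    have "prime \<bar>c - 2\<bar> \<and> prime \<bar>c + 2\<bar>" using ab2 p(1,3)
      by (auto simp: abs_minus_commute)
    moreover have "prime \<bar>d - 2\<bar> \<and> prime \<bar>d + 2\<bar>" using ab2 p(2,4)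
      by (auto simp: abs_minus_commute)
    ultimately show ?thesis using ab2 trc trd by auto
  next
    case F1: False
    show ?thesis
    proof (cases "even c \<and> even d")
      case True
      hence cd2: "c = 2 \<and> d = -2 \<or> c = -2 \<and> d = 2" using ec ed cd by auto
      have "prime \<bar>a - 2\<bar> \<and> prime \<bar>a + 2\<bar>" using cd2 p(1,2) by auto
      moreover have "prime \<bar>b - 2\<bar> \<and> prime \<bar>b + 2\<bar>" using cd2 p(3,4) by auto
      ultimately show ?thesis using cd2 tra trb by auto
    next
      case F2: False
      have False
      proof (cases "odd a \<and> odd b \<and> odd c \<and> odd d")
        case True
        then show False using o1 o2 o3 o4 ab cd by auto
      next
        case False
        then consider "even a" | "even b" | "even c" | "even d" by blast
        then show False
        proof cases
          case 1
          hence "odd b" using F1 by blast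
          show False
          proof (cases "even c")
            case True then show False using ea ec 1 s1 by auto
          next
            case oc: False
            show False
            proof (cases "even d")
              case True then show False using ea ed 1 s2 by auto
            next
              case od: False
              have "c = b - 2 \<and> d = b + 2 \<or> c = b + 2 \<and> d = b - 2" using o3 o4 \<open>odd b\<close> oc od cd by auto
              note h = this
              have "prime \<bar>b - 2\<bar> \<and> prime \<bar>b + 2\<bar>" using h q by auto
              hence "b = 5 \<or> b = -5" using trb by auto
              then show False using h ea 1 s1 s2 by auto
            qed
          qed
        next
          case 2
          hence "odd a" using F1 by blast
          show False
          proof (cases "even c")
            case True then show False using eb ec 2 s3 by auto
          next
            case oc: False
            show False
            proof (cases "even d")
              case True then show False using eb ed 2 s4 by auto
            next
              case od: False
              have "c = a - 2 \<and> d = a + 2 \<or> c = a + 2 \<and> d = a - 2" using o1 o2 \<open>odd a\<close> oc od cd by auto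
              note h = this
              have "prime \<bar>a - 2\<bar> \<and> prime \<bar>a + 2\<bar>" using h q by auto
              hence "a = 5 \<or> a = -5" using tra by auto
              then show False using h eb 2 s3 s4 by auto
            qed
          qed
        next
          case 3
          hence "odd d" using F2 by blast
          show False
          proof (cases "even a")
            case True then show False using ea ec 3 s1 by auto
          next
            case oa: False
            show False
            proof (cases "even b")
              case True then show False using eb ec 3 s3 by auto
            next
              case ob: False
              have "a = d - 2 \<and> b = d + 2 \<or> a = d + 2 \<and> b = d - 2" using o2 o4 \<open>odd d\<close> oa ob ab by auto
              note h = this
              have "prime \<bar>d - 2\<bar> \<and> prime \<bar>d + 2\<bar>" using h q by auto
              hence "d = 5 \<or> d = -5" using trd by auto
              then show False using h ec 3 s1 s3 by auto
            qed
          qed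
        next
          case 4
          hence "odd c" using F2 by blast
          show False
          proof (cases "even a")
            case True then show False using ea ed 4 s2 by auto
          next
            case oa: False
            show False
            proof (cases "even b")
              case True then show False using eb ed 4 s4 by auto
            next
              case ob: False
              have "a = c - 2 \<and> b = c + 2 \<or> a = c + 2 \<and> b = c - 2" using o1 o3 \<open>odd c\<close> oa ob ab by auto
              note h = this
              have "prime \<bar>c - 2\<bar> \<and> prime \<bar>c + 2\<bar>" using h q by auto
              hence "c = 5 \<or> c = -5" using trc by auto
              then show False using h ed 4 s2 s4 by auto
            qed
          qed
        qed
      qed
      then show ?thesis ..
    qed
  qed
qed


theorem mainTheorem5:
  fixes L :: "k122_vertex \<Rightarrow> int"
  assumes "prime_distance_labeling k122_adj L"
  shows "L X = 0 \<longleftrightarrow>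
           ({L Y1, L Y2, L Z1, L Z2} = {2, -2, 5, -5} \<and> L Y1 = - L Y2 \<and> L Z1 = - L Z2)"
proof -
  have inj: "inj L" and pr: "\<And>u v. k122_adj u v \<Longrightarrow> prime \<bar>L u - L v\<bar>"
    using assms unfolding prime_distance_labeling_def by auto
  define x where "x = L X"
  define a where "a = L Y1"
  define b where "b = L Y2"
  define c where "c = L Z1"
  define d where "d = L Z2"
  note defs = x_def a_def b_def c_def d_def
  have dist: "x \<noteq> a" "x \<noteq> b" "x \<noteq> c" "x \<noteq> d" "a \<noteq> b" "a \<noteq> c" "a \<noteq> d" "b \<noteq> c" "b \<noteq> d" "c \<noteq> d"
    unfolding defs by (auto simp: inj_eq[OF inj])
  have p: "prime \<bar>x - a\<bar>" "prime \<bar>x - b\<bar>" "prime \<bar>x - c\<bar>" "prime \<bar>x - d\<bar>"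
    "prime \<bar>a - c\<bar>" "prime \<bar>a - d\<bar>" "prime \<bar>b - c\<bar>" "prime \<bar>b - d\<bar>"
    unfolding defs by (auto intro!: pr simp: k122_adj_def)
  show ?thesis
  proof
    assume x0: "L X = 0"
    hence q: "prime \<bar>a\<bar>" "prime \<bar>b\<bar>" "prime \<bar>c\<bar>" "prime \<bar>d\<bar>" using p defs by auto
    have "(a = 2 \<or> a = -2) \<and> (b = 2 \<or> b = -2) \<and> (c = 5 \<or> c = -5) \<and> (d = 5 \<or> d = -5)
        \<or> (a = 5 \<or> a = -5) \<and> (b = 5 \<or> b = -5) \<and> (c = 2 \<or> c = -2) \<and> (d = 2 \<or> d = -2)"
      using core[OF q p(5-8) dist(5) dist(10)] .
    hence "(a = 2 \<and> b = -2 \<or> a = -2 \<and> b = 2) \<and> (c = 5 \<and> d = -5 \<or> c = -5 \<and> d = 5)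
        \<or> (a = 5 \<and> b = -5 \<or> a = -5 \<and> b = 5) \<and> (c = 2 \<and> d = -2 \<or> c = -2 \<and> d = 2)"
      using dist(5) dist(10) by linarith
    hence "{a, b, c, d} = {2, -2, 5, -5} \<and> a = - b \<and> c = - d"
      by (elim disjE conjE; simp add: insert_commute)
    thus "{L Y1, L Y2, L Z1, L Z2} = {2, -2, 5, -5} \<and> L Y1 = - L Y2 \<and> L Z1 = - L Z2"
      unfolding defs .
  next
    assume h: "{L Y1, L Y2, L Z1, L Z2} = {2, -2, 5, -5} \<and> L Y1 = - L Y2 \<and> L Z1 = - L Z2"
    hence S: "{a, b, c, d} = {2, -2, 5, -5}" unfolding defs using h unfolding defs by blast
    have P: "\<And>v. v \<in> {a, b, c, d} \<Longrightarrow> prime \<bar>x - v\<bar>" using p(1-4) by blast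
    have q: "prime \<bar>x - 2\<bar>" "prime \<bar>x - (-2)\<bar>" "prime \<bar>x - 5\<bar>" "prime \<bar>x - (-5)\<bar>"
      by (rule P, simp add: S)+
    have "x = 0"
    proof (cases "even x")
      case True
      then show ?thesis using even_pr[OF q(1)] even_pr[OF q(2)] by auto
    next
      case False
      then show ?thesis using even_pr[OF q(3)] even_pr[OF q(4)] by auto
    qed
    thus "L X = 0" using defs by simp
  qed
qed

end
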